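(* Let $K\ge1$ and consider the POMDP with world states $W=\{0,1,\ldots,K\}$, a single sensor state $S=\{1\}$, actions $A=\{1,\ldots,K\}$, where at each world state $w\in\{0,\ldots,K-1\}$ action $w+1$ takes the agent to $w+1$ with probability one and every other action takes it to $0$ with probability one, at $w=K$ every action takes the agent to $0$, and the reward is $R(w,a)=1$ if $w=K$ and $0$ otherwise. Write $\pi_a=\pi(a|1)$ for a stationary policy. The optimal memoryless policy (the maximizer over $\pi\in\Delta_A$ of the average reward $\mathcal{R}(\pi)=p^\pi(K)$, where $p^\pi$ is the stationary world state distribution) is given by $\pi_1=c$ and $\pi_i=\pi_{i-1}+c\,\pi_1\cdots\pi_{i-1}$ for $i=2,\ldots,K$, where $c$ is the unique real positive number for which the $\pi_i$ so defined satisfy $\pi_1+\cdots+\pi_K=1$.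
   Context: For a stationary policy (a distribution $(\pi_1,\ldots,\pi_K)$ over actions, since there is one sensor state), the world state chain has transition probabilities $p(w+1|w)=\pi_{w+1}$, $p(0|w)=1-\pi_{w+1}$ for $w<K$, and $p(0|K)=1$; $p^\pi$ denotes its stationary distribution, and the expected reward per time step is $p^\pi(K)$. *)

theory Defs
  imports Complex_Main
begin

text \<open>World states are 0..K, actions are 1..K, a single sensor state.\<close>

definition policy :: "nat \<Rightarrow> (nat \<Rightarrow> real) \<Rightarrow> bool" where
  "policy K q \<longleftrightarrow> (\<forall>a\<in>{1..K}. 0 \<le> q a) \<and> (\<Sum>a=1..K. q a) = 1"

definition trans :: "nat \<Rightarrow> (nat \<Rightarrow> real) \<Rightarrow> nat \<Rightarrow> nat \<Rightarrow> real" where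
  "trans K q w v =
     (if w < K then (if v = w + 1 then q (w + 1) else if v = 0 then 1 - q (w + 1) else 0)
      else (if v = 0 then 1 else 0))"

definition is_stationary :: "nat \<Rightarrow> (nat \<Rightarrow> real) \<Rightarrow> (nat \<Rightarrow> real) \<Rightarrow> bool" where
  "is_stationary K q p \<longleftrightarrow>
     (\<forall>v\<in>{0..K}. 0 \<le> p v) \<and> (\<forall>v. K < v \<longrightarrow> p v = 0) \<and> (\<Sum>v=0..K. p v) = 1 \<and>
     (\<forall>v\<in>{0..K}. p v = (\<Sum>w=0..K. p w * trans K q w v))"

definition stat_dist :: "nat \<Rightarrow> (nat \<Rightarrow> real) \<Rightarrow> nat \<Rightarrow> real" where
  "stat_dist K q = (THE p. is_stationary K q p)"

definition avg_reward :: "nat \<Rightarrow> (nat \<Rightarrow> real) \<Rightarrow> real" where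
  "avg_reward K q = stat_dist K q K"

fun opt_pol :: "real \<Rightarrow> nat \<Rightarrow> real" where
  "opt_pol c 0 = 0"
| "opt_pol c (Suc 0) = c"
| "opt_pol c (Suc (Suc i)) = opt_pol c (Suc i) + c * (\<Prod>j\<in>{1..Suc i}. opt_pol c j)"

end

theory Submission
  imports Defs
begin

definition pp :: "(nat \<Rightarrow> real) \<Rightarrow> nat \<Rightarrow> real" where
  "pp q j = (\<Prod>i\<in>{1..j}. q i)"

lemma pp_0[simp]: "pp q 0 = 1" by (simp add: pp_def)
lemma pp_Suc: "pp q (Suc j) = pp q j * q (Suc j)"
  by (simp add: pp_def prod.cl_ivl_Suc)

lemma pp_nonneg: "(\<And>i. 1 \<le> i \<Longrightarrow> i \<le> K \<Longrightarrow> 0 \<le> q i) \<Longrightarrow> j \<le> K \<Longrightarrow> 0 \<le> pp q j"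
  unfolding pp_def by (intro prod_nonneg) auto

lemma pp_pos: "(\<And>i. 1 \<le> i \<Longrightarrow> i \<le> K \<Longrightarrow> 0 < q i) \<Longrightarrow> j \<le> K \<Longrightarrow> 0 < pp q j"
  unfolding pp_def by (intro prod_pos) auto

lemma pp_split: "j \<le> K \<Longrightarrow> pp q K = pp q j * (\<Prod>k\<in>{Suc j..K}. q k)"
proof (induction K rule: dec_induct)
  case base then show ?case by simp
next
  case (step n) then show ?case by (simp add: pp_Suc prod.cl_ivl_Suc)
qed

lemma trans_sum_pos:
  assumes "1 \<le> v" "v \<le> K"
  shows "(\<Sum>w=0..K. p w * trans K q w v) = p (v-1) * q v"
proof -
  have "(\<Sum>w=0..K. p w * trans K q w v) = (\<Sum>w=0..K. if w = v - 1 then p (v-1) * q v else 0)"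
    using assms by (intro sum.cong) (auto simp: trans_def)
  also have "\<dots> = p (v-1) * q v" using assms by (subst sum.delta) auto
  finally show ?thesis .
qed

lemma trans_sum_zero:
  "(\<Sum>w=0..K. p w * trans K q w 0) = (\<Sum>w<K. p w * (1 - q (Suc w))) + p K"
proof -
  have "(\<Sum>w=0..K. p w * trans K q w 0) = (\<Sum>w<Suc K. p w * trans K q w 0)"
    by (simp add: atLeast0AtMost lessThan_Suc_atMost)
  also have "\<dots> = (\<Sum>w<K. p w * trans K q w 0) + p K" by (simp add: trans_def)
  also have "(\<Sum>w<K. p w * trans K q w 0) = (\<Sum>w<K. p w * (1 - q (Suc w)))"
    by (intro sum.cong) (auto simp: trans_def)
  finally show ?thesis .
qed

definition ZZ :: "nat \<Rightarrow> (nat \<Rightarrow> real) \<Rightarrow> real" where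
  "ZZ K q = (\<Sum>v=0..K. pp q v)"

definition sd :: "nat \<Rightarrow> (nat \<Rightarrow> real) \<Rightarrow> nat \<Rightarrow> real" where
  "sd K q v = (if v \<le> K then pp q v / ZZ K q else 0)"

lemma ZZ_pos:
  assumes "policy K q" shows "0 < ZZ K q"
proof -
  have nn: "\<And>v. v \<in> {0..K} \<Longrightarrow> 0 \<le> pp q v"
    using assms by (intro pp_nonneg[of K]) (auto simp: policy_def)
  have "ZZ K q = pp q 0 + (\<Sum>v\<in>{0..K}-{0}. pp q v)"
    unfolding ZZ_def by (subst sum.remove[of _ 0]) auto
  moreover have "0 \<le> (\<Sum>v\<in>{0..K}-{0}. pp q v)" using nn by (intro sum_nonneg) auto
  ultimately show ?thesis by simp
qed

lemma telescope: "(\<Sum>w<K. (f w - f (Suc w)) :: real) = f 0 - f K"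
  by (induction K) auto

lemma sd_stationary:
  assumes "policy K q" shows "is_stationary K q (sd K q)"
proof -
  have Z: "0 < ZZ K q" using ZZ_pos[OF assms] .
  have nn: "\<And>v. v \<le> K \<Longrightarrow> 0 \<le> pp q v"
    using assms by (intro pp_nonneg[of K]) (auto simp: policy_def)
  have A: "\<forall>v\<in>{0..K}. 0 \<le> sd K q v" using Z nn by (auto simp: sd_def)
  have B: "\<forall>v. K < v \<longrightarrow> sd K q v = 0" by (auto simp: sd_def)
  have C: "(\<Sum>v=0..K. sd K q v) = 1"
  proof -
    have "(\<Sum>v=0..K. sd K q v) = (\<Sum>v=0..K. pp q v / ZZ K q)"
      by (intro sum.cong) (auto simp: sd_def)
    also have "\<dots> = (\<Sum>v=0..K. pp q v) / ZZ K q" by (simp add: sum_divide_distrib)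
    also have "\<dots> = 1" using Z by (simp add: ZZ_def)
    finally show ?thesis .
  qed
  have D: "sd K q v = (\<Sum>w=0..K. sd K q w * trans K q w v)" if v: "v \<in> {0..K}" for v
  proof (cases "v = 0")
    case True
    have "(\<Sum>w<K. sd K q w * (1 - q (Suc w))) = (\<Sum>w<K. sd K q w - sd K q (Suc w))"
      using Z by (intro sum.cong) (auto simp: sd_def pp_Suc field_simps)
    also have "\<dots> = sd K q 0 - sd K q K" by (rule telescope)
    finally show ?thesis using True by (simp add: trans_sum_zero)
  next
    case False
    then have "1 \<le> v" "v \<le> K" using v by auto
    then obtain u where u: "v = Suc u" "u < K" by (cases v) auto
    have "(\<Sum>w=0..K. sd K q w * trans K q w v) = sd K q (v-1) * q v"
      using \<open>1 \<le> v\<close> \<open>v \<le> K\<close> by (rule trans_sum_pos)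
    then show ?thesis using u by (simp add: sd_def pp_Suc)
  qed
  show ?thesis unfolding is_stationary_def using A B C D by blast
qed

lemma stationary_unique:
  assumes "policy K q" "is_stationary K q p" shows "p = sd K q"
proof -
  have rec: "p v = p (v - 1) * q v" if "1 \<le> v" "v \<le> K" for v
    using assms(2) that trans_sum_pos[OF that, of p q] unfolding is_stationary_def by auto
  have pv: "p v = p 0 * pp q v" if "v \<le> K" for v
    using that
  proof (induction v)
    case (Suc v) then show ?case using rec[of "Suc v"] by (simp add: pp_Suc)
  qed simp
  have "1 = (\<Sum>v=0..K. p v)" using assms(2) unfolding is_stationary_def by auto
  also have "\<dots> = (\<Sum>v=0..K. p 0 * pp q v)"
  proof (rule sum.cong)
    fix v assume "v \<in> {0..K}" then show "p v = p 0 * pp q v" by (intro pv) auto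
  qed simp
  also have "\<dots> = p 0 * ZZ K q" by (simp add: ZZ_def sum_distrib_left)
  finally have p0: "p 0 = 1 / ZZ K q" using ZZ_pos[OF assms(1)] by (simp add: field_simps)
  show ?thesis
  proof
    fix v
    have out: "K < v \<Longrightarrow> p v = 0" using assms(2) unfolding is_stationary_def by blast
    show "p v = sd K q v"
    proof (cases "v \<le> K")
      case True then show ?thesis using pv[OF True] p0 by (simp add: sd_def)
    qed (simp add: out sd_def)
  qed
qed

lemma avg_reward_eq: "policy K q \<Longrightarrow> avg_reward K q = pp q K / ZZ K q"
proof -
  assume a: "policy K q"
  have "stat_dist K q = sd K q"
    unfolding stat_dist_def
    using sd_stationary[OF a] stationary_unique[OF a] by (rule the_equality)
  then show ?thesis by (simp add: avg_reward_def sd_def)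
qed

lemma opt_SS: "opt_pol c (Suc (Suc i)) = opt_pol c (Suc i) + c * pp (opt_pol c) (Suc i)"
  by (simp add: pp_def)

declare opt_pol.simps(3)[simp del]

lemma opt_pos_aux: "0 < c \<Longrightarrow> 0 < opt_pol c (Suc i) \<and> 0 < pp (opt_pol c) (Suc i)"
proof (induction i)
  case 0 then show ?case by (simp add: pp_Suc)
next
  case (Suc i)
  then have "0 < opt_pol c (Suc (Suc i))" by (simp add: opt_SS add_pos_pos)
  then show ?case using Suc by (simp add: pp_Suc[of _ "Suc i"])
qed

lemma opt_pos: "0 < c \<Longrightarrow> 1 \<le> i \<Longrightarrow> 0 < opt_pol c i"
  using opt_pos_aux[of c "i - 1"] by (cases i) auto

lemma opt_nn_aux: "0 \<le> c \<Longrightarrow> 0 \<le> opt_pol c (Suc i) \<and> 0 \<le> pp (opt_pol c) (Suc i)"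
proof (induction i)
  case 0 then show ?case by (simp add: pp_Suc)
next
  case (Suc i)
  then have "0 \<le> opt_pol c (Suc (Suc i))" by (simp add: opt_SS)
  then show ?case using Suc by (simp add: pp_Suc[of _ "Suc i"])
qed

lemma opt_mono_aux:
  assumes "0 \<le> c" "c < d"
  shows "opt_pol c (Suc i) < opt_pol d (Suc i) \<and> pp (opt_pol c) (Suc i) \<le> pp (opt_pol d) (Suc i)"
proof (induction i)
  case 0 then show ?case using assms by (simp add: pp_Suc)
next
  case (Suc i)
  have nc: "0 \<le> opt_pol c (Suc i)" "0 \<le> pp (opt_pol c) (Suc i)" "0 \<le> opt_pol c (Suc (Suc i))"
    using opt_nn_aux[of c i] opt_nn_aux[of c "Suc i"] assms by auto
  have "c * pp (opt_pol c) (Suc i) \<le> d * pp (opt_pol d) (Suc i)"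
    using Suc assms nc by (intro mult_mono) auto
  then have 1: "opt_pol c (Suc (Suc i)) < opt_pol d (Suc (Suc i))" using Suc by (simp add: opt_SS)
  have "pp (opt_pol c) (Suc i) * opt_pol c (Suc (Suc i)) \<le> pp (opt_pol d) (Suc i) * opt_pol d (Suc (Suc i))"
    using Suc 1 nc by (intro mult_mono) auto
  then show ?case using 1 by (simp add: pp_Suc[of _ "Suc i"])
qed

lemma opt_zero_aux: "opt_pol 0 (Suc i) = 0"
  by (induction i) (auto simp: opt_SS)

lemma opt_zero: "opt_pol 0 i = 0"
  using opt_zero_aux[of "i - 1"] by (cases i) auto

lemma opt_cont_aux:
  "continuous_on A (\<lambda>c. opt_pol c (Suc i)) \<and> continuous_on A (\<lambda>c. pp (opt_pol c) (Suc i))"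
proof (induction i)
  case 0 then show ?case by (simp add: pp_Suc continuous_on_id)
next
  case (Suc i)
  then have 1: "continuous_on A (\<lambda>c. opt_pol c (Suc (Suc i)))"
    unfolding opt_SS by (intro continuous_intros) auto
  then show ?case using Suc unfolding pp_Suc[of _ "Suc i"] by (intro conjI continuous_intros) auto
qed

lemma opt_cont: "1 \<le> i \<Longrightarrow> continuous_on A (\<lambda>c. opt_pol c i)"
  using opt_cont_aux[of A "i - 1"] by (cases i) auto

lemma opt_strict: "0 \<le> c \<Longrightarrow> c < d \<Longrightarrow> 1 \<le> i \<Longrightarrow> opt_pol c i < opt_pol d i"
  using opt_mono_aux[of c d "i - 1"] by (cases i) auto

lemma exists_c:
  assumes "1 \<le> K" shows "\<exists>!c::real. 0 < c \<and> (\<Sum>i=1..K. opt_pol c i) = 1"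
proof -
  let ?f = "\<lambda>c. (\<Sum>i=1..K. opt_pol c i)"
  have f0: "?f 0 = 0" by (simp add: opt_zero)
  have "opt_pol 1 1 \<le> ?f 1"
    using assms by (intro member_le_sum) (auto intro: opt_pos[of 1, THEN less_imp_le])
  then have f1: "1 \<le> ?f 1" by simp
  have cont: "continuous_on {0..1} ?f"
    by (intro continuous_on_sum) (auto intro: opt_cont)
  obtain c where c: "0 \<le> c" "c \<le> 1" "?f c = 1"
    using IVT'[of ?f 0 1 1, OF _ f1 _ cont] f0 by auto
  then have cpos: "0 < c" using f0 by (cases "c = 0") auto
  show ?thesis
  proof (rule ex1I[of _ c])
    show "0 < c \<and> ?f c = 1" using cpos c by auto
  next
    fix d assume d: "0 < d \<and> ?f d = 1"
    have lt: "?f a < ?f b" if "0 < a" "a < b" for a b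
      using that assms by (intro sum_strict_mono) (auto intro: opt_strict)
    show "d = c"
    proof (rule ccontr)
      assume "d \<noteq> c"
      then have "d < c \<or> c < d" by auto
      then show False using lt[of d c] lt[of c d] d c cpos by auto
    qed
  qed
qed

lemma key_sum: "0 < c \<Longrightarrow> c * (\<Sum>j<Suc k. pp (opt_pol c) j) = opt_pol c (Suc k)"
proof (induction k)
  case 0 then show ?case by simp
next
  case (Suc k)
  have "c * (\<Sum>j<Suc (Suc k). pp (opt_pol c) j) = c * (\<Sum>j<Suc k. pp (opt_pol c) j) + c * pp (opt_pol c) (Suc k)"
    by (simp add: algebra_simps)
  also have "\<dots> = opt_pol c (Suc (Suc k))" using Suc by (simp add: opt_SS)
  finally show ?case .
qed

lemma gibbs:
  fixes x q :: "nat \<Rightarrow> real"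
  assumes "\<And>k. k \<in> {1..K} \<Longrightarrow> 0 < x k" "\<And>k. k \<in> {1..K} \<Longrightarrow> 0 < q k"
    "(\<Sum>k=1..K. x k) = 1" "(\<Sum>k=1..K. q k) = 1"
  shows "0 \<le> (\<Sum>k=1..K. x k * ln (x k / q k))"
proof -
  have "x k - q k \<le> x k * ln (x k / q k)" if k: "k \<in> {1..K}" for k
  proof -
    have xp: "0 < x k" and qp: "0 < q k" using assms k by auto
    have "ln (q k / x k) \<le> q k / x k - 1" using xp qp by (intro ln_le_minus_one) simp
    moreover have "ln (x k / q k) = - ln (q k / x k)" using xp qp by (simp add: ln_div)
    ultimately have "1 - q k / x k \<le> ln (x k / q k)" by simp
    then have "x k * (1 - q k / x k) \<le> x k * ln (x k / q k)" using xp by (intro mult_left_mono) auto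
    then show ?thesis using xp by (simp add: algebra_simps)
  qed
  then have "(\<Sum>k=1..K. x k - q k) \<le> (\<Sum>k=1..K. x k * ln (x k / q k))" by (intro sum_mono)
  then show ?thesis using assms by (simp add: sum_subtractf)
qed

lemma aux_frac: "0 < (A::real) \<Longrightarrow> 0 < B \<Longrightarrow> 0 < P \<Longrightarrow> 0 < Q \<Longrightarrow> B / (B * Q) = A / (A * P) * (P / Q)"
  by (simp add: field_simps)

definition GG :: "nat \<Rightarrow> (nat \<Rightarrow> real) \<Rightarrow> real" where
  "GG K q = (\<Sum>j<K. pp q j / pp q K)"

lemma main_ineq:
  fixes q :: "nat \<Rightarrow> real"
  assumes c: "0 < c" "(\<Sum>i=1..K. opt_pol c i) = 1"
    and qpos: "\<And>k. k \<in> {1..K} \<Longrightarrow> 0 < q k" and qs: "(\<Sum>k=1..K. q k) = 1"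
  shows "GG K (opt_pol c) \<le> GG K q"
proof -
  define x where "x = opt_pol c"
  have xpos: "\<And>k. k \<in> {1..K} \<Longrightarrow> 0 < x k" unfolding x_def using c by (auto intro: opt_pos)
  have ppx: "\<And>j. j \<le> K \<Longrightarrow> 0 < pp x j" using xpos by (intro pp_pos[of K]) auto
  have ppq: "\<And>j. j \<le> K \<Longrightarrow> 0 < pp q j" using qpos by (intro pp_pos[of K]) auto
  define a where "a k = ln (x k / q k)" for k
  define w where "w j = pp x j / pp x K" for j
  have wpos: "\<And>j. j \<le> K \<Longrightarrow> 0 < w j" unfolding w_def using ppx by auto
  have tm: "pp q j / pp q K = w j * exp (\<Sum>k\<in>{Suc j..K}. a k)" if j: "j < K" for j
  proof -
    have ex: "exp (\<Sum>k\<in>{Suc j..K}. a k) = (\<Prod>k\<in>{Suc j..K}. x k) / (\<Prod>k\<in>{Suc j..K}. q k)"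
      unfolding a_def using xpos qpos j
      by (simp add: exp_sum prod_dividef)
    have px: "pp x K = pp x j * (\<Prod>k\<in>{Suc j..K}. x k)" using j by (intro pp_split) auto
    have pq: "pp q K = pp q j * (\<Prod>k\<in>{Suc j..K}. q k)" using j by (intro pp_split) auto
    have "0 < pp x j" "0 < pp q j" using ppx ppq j by auto
    moreover have "0 < (\<Prod>k\<in>{Suc j..K}. x k)" "0 < (\<Prod>k\<in>{Suc j..K}. q k)"
      using xpos qpos by (auto intro!: prod_pos)
    ultimately show ?thesis unfolding ex w_def px pq by (rule aux_frac)
  qed
  have "GG K q = (\<Sum>j<K. w j * exp (\<Sum>k\<in>{Suc j..K}. a k))"
    unfolding GG_def by (intro sum.cong) (auto simp: tm)
  also have "\<dots> \<ge> (\<Sum>j<K. w j * (1 + (\<Sum>k\<in>{Suc j..K}. a k)))"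
    using wpos by (intro sum_mono mult_left_mono) (auto simp: exp_ge_add_one_self less_imp_le)
  finally have ge: "(\<Sum>j<K. w j + (\<Sum>k\<in>{Suc j..K}. w j * a k)) \<le> GG K q"
    by (simp add: algebra_simps sum_distrib_left)
  have sw: "(\<Sum>j<K. (\<Sum>k\<in>{Suc j..K}. w j * a k)) = (\<Sum>k=1..K. a k * (\<Sum>j<k. w j))"
  proof -
    have "(\<Sum>j<K. (\<Sum>k\<in>{Suc j..K}. w j * a k)) = (\<Sum>j<K. (\<Sum>k\<in>{1..K}. if j < k then w j * a k else 0))"
    proof (rule sum.cong)
      fix j assume "j \<in> {..<K}"
      have "{k\<in>{1..K}. j < k} = {Suc j..K}" by auto
      then show "(\<Sum>k\<in>{Suc j..K}. w j * a k) = (\<Sum>k\<in>{1..K}. if j < k then w j * a k else 0)"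
        using sum.inter_filter[of "{1..K}" "\<lambda>k. w j * a k" "\<lambda>k. j < k"] by simp
    qed simp
    also have "\<dots> = (\<Sum>k\<in>{1..K}. (\<Sum>j<K. if j < k then w j * a k else 0))" by (rule sum.swap)
    also have "\<dots> = (\<Sum>k=1..K. a k * (\<Sum>j<k. w j))"
    proof (rule sum.cong)
      fix k assume k: "k \<in> {1..K}"
      have "{j\<in>{..<K}. j < k} = {..<k}" using k by auto
      then show "(\<Sum>j<K. if j < k then w j * a k else 0) = a k * (\<Sum>j<k. w j)"
        using sum.inter_filter[of "{..<K}" "\<lambda>j. w j * a k" "\<lambda>j. j < k"]
        by (simp add: sum_distrib_left mult.commute)
    qed simp
    finally show ?thesis .
  qed
  have wsum: "(\<Sum>j<k. w j) = x k / (c * pp x K)" if k: "k \<in> {1..K}" for k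
  proof -
    obtain m where m: "k = Suc m" using k by (cases k) auto
    have "c * (\<Sum>j<k. pp x j) = x k" unfolding m x_def using key_sum[OF c(1)] by simp
    then have "(\<Sum>j<k. pp x j) = x k / c" using c by (simp add: field_simps)
    then show ?thesis unfolding w_def by (simp add: sum_divide_distrib[symmetric])
  qed
  have "(\<Sum>k=1..K. a k * (\<Sum>j<k. w j)) = (\<Sum>k=1..K. x k * ln (x k / q k)) / (c * pp x K)"
    unfolding sum_divide_distrib by (intro sum.cong) (auto simp: wsum a_def)
  moreover have "0 \<le> (\<Sum>k=1..K. x k * ln (x k / q k))"
    using xpos qpos c(2) qs unfolding x_def by (intro gibbs) auto
  moreover have "0 < c * pp x K" using c ppx by auto
  ultimately have "0 \<le> (\<Sum>k=1..K. a k * (\<Sum>j<k. w j))" by simp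
  moreover have "GG K x = (\<Sum>j<K. w j)" unfolding GG_def w_def by simp
  ultimately show ?thesis using ge sw unfolding x_def by (simp add: sum.distrib)
qed

lemma avg_GG:
  assumes "policy K q" "0 < pp q K"
  shows "avg_reward K q = 1 / (GG K q + 1)"
proof -
  have "ZZ K q = (\<Sum>v<Suc K. pp q v)" unfolding ZZ_def by (simp add: atLeast0AtMost lessThan_Suc_atMost)
  also have "\<dots> = (\<Sum>v<K. pp q v) + pp q K" by simp
  also have "\<dots> = pp q K * (GG K q + 1)"
    unfolding GG_def using assms(2) by (simp add: sum_divide_distrib[symmetric] field_simps)
  finally show ?thesis using avg_reward_eq[OF assms(1)] assms(2) by simp
qed

theorem proposition10:
  fixes K :: nat
  assumes "1 \<le> K"
  shows "(\<exists>!c::real. 0 < c \<and> (\<Sum>i=1..K. opt_pol c i) = 1) \<and>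
         (\<forall>c::real. 0 < c \<and> (\<Sum>i=1..K. opt_pol c i) = 1 \<longrightarrow>
            policy K (opt_pol c) \<and>
            (\<forall>q. policy K q \<longrightarrow> avg_reward K q \<le> avg_reward K (opt_pol c)))"
proof (intro conjI allI impI)
  show "\<exists>!c::real. 0 < c \<and> (\<Sum>i=1..K. opt_pol c i) = 1" using exists_c[OF assms] .
next
  fix c :: real assume c: "0 < c \<and> (\<Sum>i=1..K. opt_pol c i) = 1"
  then show pol: "policy K (opt_pol c)" unfolding policy_def
    by (auto intro: opt_pos[THEN less_imp_le])
  have xpos: "0 < pp (opt_pol c) K" using c by (intro pp_pos[of K]) (auto intro: opt_pos)
  have GGx: "0 \<le> GG K (opt_pol c)" unfolding GG_def using xpos c
    by (intro sum_nonneg divide_nonneg_pos pp_nonneg[of K]) (auto intro: opt_pos[THEN less_imp_le])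
  have ax: "avg_reward K (opt_pol c) = 1 / (GG K (opt_pol c) + 1)" using avg_GG[OF pol xpos] .
  fix q assume q: "policy K q"
  show "avg_reward K q \<le> avg_reward K (opt_pol c)"
  proof (cases "\<forall>k\<in>{1..K}. 0 < q k")
    case True
    have qpos: "0 < pp q K" using True by (intro pp_pos[of K]) auto
    have "GG K (opt_pol c) \<le> GG K q"
      using c True q unfolding policy_def by (intro main_ineq) auto
    then show ?thesis using avg_GG[OF q qpos] ax GGx by (simp add: frac_le)
  next
    case False
    then obtain k where k: "k \<in> {1..K}" "q k = 0" using q unfolding policy_def by force
    have "pp q K = 0" unfolding pp_def using k by (intro prod_zero) auto
    then have "avg_reward K q = 0" using avg_reward_eq[OF q] by simp
    then show ?thesis using ax GGx by simp
  qed
qed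

end
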